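(* There exists a directed set $\mathcal A$, which is not a cardinal number, with $\operatorname{card}(\mathcal A)=\operatorname{cov}(\mathcal N)$, such that $\mathcal{ANM}_{\mathcal A}\setminus\mathcal{ND}_{\mathcal A}$ is $2^{\mathfrak c}$-coneable in $\left(\mathbb R^{[0,1]}\right)^{\mathcal A}$.
   Context: A directed set is a nonempty set $\mathcal A$ with a reflexive transitive relation $\le$ in which any two elements have an upper bound; net convergence: $x_A\to x$ if for each neighbourhood $U$ of $x$ there is $A_0$ with $x_A\in U$ for all $A\ge A_0$. $\left(\mathbb R^{[0,1]}\right)^{\mathcal A}$ is the real vector space (algebra) of nets of functions $[0,1]\to\mathbb R$ with indexwise operations. $\lambda$ is Lebesgue measure, $\mathcal N$ the Lebesgue null subsets of $[0,1]$, $\operatorname{cov}(\mathcal N)$ the least size of a subfamily of $\mathcal N$ covering $[0,1]$. $\mathcal{ANM}_{\mathcal A}$: nets of Lebesgue measurable $f_A:[0,1]\to\mathbb R$ converging a.e. to a measurable $f$ but not converging in measure to $f$ (i.e. there is $\varepsilon>0$ such that $\lambda(\{x:|f_A(x)-f(x)|\ge\varepsilon\})$ does not converge to $0$). $\mathcal{ND}_{\mathcal A}$: nets of Lebesgue measurable $f_A:[0,1]\to\mathbb R$ such that there is an integrable $g$ with $|f_A|\le g$ a.e. for all $A$, $f_A\to f$ a.e. for some integrable $f$, and $\int|f_A-f|\,d\lambda$ does not converge to $0$. A set $S$ is positively (resp. negatively) $\kappa$-coneable if there is a linearly independent $B\subset S$, $\operatorname{card}(B)=\kappa$, such that all finite combinations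 $\sum a_ix_i$, $x_i\in B$, with all $a_i>0$ (resp. all $a_i<0$) lie in $S$; $S$ is $\kappa$-coneable if it is both positively and negatively $\kappa$-coneable. *)

theory Defs
  imports "HOL-Analysis.Analysis"
begin

definition directed_set :: "'i set \<Rightarrow> ('i \<Rightarrow> 'i \<Rightarrow> bool) \<Rightarrow> bool" where
  "directed_set A le \<longleftrightarrow> A \<noteq> {} \<and> (\<forall>a\<in>A. le a a)
     \<and> (\<forall>a\<in>A. \<forall>b\<in>A. \<forall>c\<in>A. le a b \<and> le b c \<longrightarrow> le a c)
     \<and> (\<forall>a\<in>A. \<forall>b\<in>A. \<exists>c\<in>A. le a c \<and> le b c)"

definition is_cardinal_dirset :: "'i set \<Rightarrow> ('i \<Rightarrow> 'i \<Rightarrow> bool) \<Rightarrow> bool" where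
  "is_cardinal_dirset A le \<longleftrightarrow> card_order_on A {(a, b). a \<in> A \<and> b \<in> A \<and> le a b}"

definition net_tendsto :: "'i set \<Rightarrow> ('i \<Rightarrow> 'i \<Rightarrow> bool) \<Rightarrow> ('i \<Rightarrow> real) \<Rightarrow> real \<Rightarrow> bool" where
  "net_tendsto A le x l \<longleftrightarrow>
     (\<forall>e>0. \<exists>a0\<in>A. \<forall>a\<in>A. le a0 a \<longrightarrow> \<bar>x a - l\<bar> < e)"

abbreviation lam01 :: "real measure" where
  "lam01 \<equiv> lebesgue_on {0..1}"

definition null_cover :: "real set set \<Rightarrow> bool" where
  "null_cover F \<longleftrightarrow> (\<forall>N\<in>F. N \<subseteq> {0..1} \<and> N \<in> null_sets lebesgue) \<and> {0..1} \<subseteq> \<Union>F"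

definition card_eq_cov_N :: "'i set \<Rightarrow> bool" where
  "card_eq_cov_N A \<longleftrightarrow> (\<exists>F. null_cover F \<and> (card_of A, card_of F) \<in> ordIso)
     \<and> (\<forall>F. null_cover F \<longrightarrow> (card_of A, card_of F) \<in> ordLeq)"

text \<open>The space (R^[0,1])^A, represented extensionally (value 0 outside A \<times> [0,1]).\<close>
definition nets :: "'i set \<Rightarrow> ('i \<Rightarrow> real \<Rightarrow> real) set" where
  "nets A = {F. \<forall>a t. (a \<notin> A \<or> t \<notin> {0..1}) \<longrightarrow> F a t = 0}"

definition lin_comb :: "('i \<Rightarrow> real \<Rightarrow> real) set \<Rightarrow> (('i \<Rightarrow> real \<Rightarrow> real) \<Rightarrow> real) \<Rightarrow> 'i \<Rightarrow> real \<Rightarrow> real" where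
  "lin_comb T c = (\<lambda>a t. \<Sum>F\<in>T. c F * F a t)"

definition lin_indep :: "('i \<Rightarrow> real \<Rightarrow> real) set \<Rightarrow> bool" where
  "lin_indep B \<longleftrightarrow> (\<forall>T c. finite T \<and> T \<subseteq> B \<and> lin_comb T c = (\<lambda>a t. 0) \<longrightarrow> (\<forall>F\<in>T. c F = 0))"

definition ANM :: "'i set \<Rightarrow> ('i \<Rightarrow> 'i \<Rightarrow> bool) \<Rightarrow> ('i \<Rightarrow> real \<Rightarrow> real) set" where
  "ANM A le = {F \<in> nets A. (\<forall>a\<in>A. F a \<in> borel_measurable lam01) \<and>
     (\<exists>f \<in> borel_measurable lam01.
        (AE x in lam01. net_tendsto A le (\<lambda>a. F a x) (f x)) \<and>
        (\<exists>e>0. \<not> net_tendsto A le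
            (\<lambda>a. measure lam01 {x \<in> {0..1}. \<bar>F a x - f x\<bar> \<ge> e}) 0))}"

definition ND :: "'i set \<Rightarrow> ('i \<Rightarrow> 'i \<Rightarrow> bool) \<Rightarrow> ('i \<Rightarrow> real \<Rightarrow> real) set" where
  "ND A le = {F \<in> nets A. (\<forall>a\<in>A. F a \<in> borel_measurable lam01) \<and>
     (\<exists>g. integrable lam01 g \<and> (\<forall>a\<in>A. AE x in lam01. \<bar>F a x\<bar> \<le> g x)) \<and>
     (\<exists>f. integrable lam01 f \<and>
        (AE x in lam01. net_tendsto A le (\<lambda>a. F a x) (f x)) \<and>
        \<not> net_tendsto A le (\<lambda>a. integral\<^sup>L lam01 (\<lambda>x. \<bar>F a x - f x\<bar>)) 0)}"

text \<open>kappa-coneability of S inside the space V, kappa given as the cardinality of a set K.\<close>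
definition pos_coneable :: "('i \<Rightarrow> real \<Rightarrow> real) set \<Rightarrow> ('i \<Rightarrow> real \<Rightarrow> real) set \<Rightarrow> 'k set \<Rightarrow> bool" where
  "pos_coneable V S K \<longleftrightarrow> (\<exists>B. B \<subseteq> S \<and> S \<subseteq> V \<and> lin_indep B \<and> (card_of B, card_of K) \<in> ordIso \<and>
     (\<forall>T c. finite T \<and> T \<noteq> {} \<and> T \<subseteq> B \<and> (\<forall>F\<in>T. c F > 0) \<longrightarrow> lin_comb T c \<in> S))"

definition neg_coneable :: "('i \<Rightarrow> real \<Rightarrow> real) set \<Rightarrow> ('i \<Rightarrow> real \<Rightarrow> real) set \<Rightarrow> 'k set \<Rightarrow> bool" where
  "neg_coneable V S K \<longleftrightarrow> (\<exists>B. B \<subseteq> S \<and> S \<subseteq> V \<and> lin_indep B \<and> (card_of B, card_of K) \<in> ordIso \<and>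
     (\<forall>T c. finite T \<and> T \<noteq> {} \<and> T \<subseteq> B \<and> (\<forall>F\<in>T. c F < 0) \<longrightarrow> lin_comb T c \<in> S))"

definition coneable :: "('i \<Rightarrow> real \<Rightarrow> real) set \<Rightarrow> ('i \<Rightarrow> real \<Rightarrow> real) set \<Rightarrow> 'k set \<Rightarrow> bool" where
  "coneable V S K \<longleftrightarrow> pos_coneable V S K \<and> neg_coneable V S K"

end

theory Submission
  imports Defs
begin
unbundle cardinal_syntax


lemma lists_len_ordLeq:
  assumes inf: "\<not> finite X"
  shows "|{xs \<in> lists X. length xs = n}| \<le>o |X|"
proof (induction n)
  case 0
  have "{xs \<in> lists X. length xs = 0} = {[]}" by auto
  moreover have "X \<noteq> {}" using inf by auto
  ultimately show ?case using card_of_singl_ordLeq by metis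
next
  case (Suc n)
  have eq: "{xs \<in> lists X. length xs = Suc n} = (\<lambda>(x,xs). x#xs) ` (X \<times> {xs \<in> lists X. length xs = n})"
    by (auto simp: length_Suc_conv image_iff)
  have "|(\<lambda>(x,xs). x#xs) ` (X \<times> {xs \<in> lists X. length xs = n})| \<le>o |X \<times> {xs \<in> lists X. length xs = n}|"
    by (rule card_of_image)
  also have "|X \<times> {xs \<in> lists X. length xs = n}| \<le>o |X \<times> X|"
    using Suc card_of_Times_mono2 by blast
  also have "|X \<times> X| \<le>o |X|"
    using card_of_Times_same_infinite[OF inf] ordIso_iff_ordLeq by blast
  finally show ?case unfolding eq .
qed

lemma lists_ordLeq:
  assumes inf: "\<not> finite X"
  shows "|lists X| \<le>o |X|"
proof -
  have "lists X = (\<Union>n\<in>UNIV. {xs \<in> lists X. length xs = n})" by auto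
  moreover have "|\<Union>n\<in>(UNIV::nat set). {xs \<in> lists X. length xs = n}| \<le>o |X|"
    apply (rule card_of_UNION_ordLeq_infinite[OF inf])
    using inf infinite_iff_card_of_nat apply blast
    using lists_len_ordLeq[OF inf] by blast
  ultimately show ?thesis by simp
qed

lemma Fpow_ordLeq:
  assumes inf: "\<not> finite X"
  shows "|Fpow X| \<le>o |X|"
proof -
  have "Fpow X \<subseteq> set ` lists X"
    unfolding Fpow_def
  proof
    fix F assume "F \<in> {F. F \<subseteq> X \<and> finite F}"
    then obtain xs where "set xs = F" "F \<subseteq> X" using finite_list by blast
    then show "F \<in> set ` lists X" by auto
  qed
  then have "|Fpow X| \<le>o |set ` lists X|" by (rule card_of_mono1)
  also have "|set ` lists X| \<le>o |lists X|" by (rule card_of_image)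
  also have "|lists X| \<le>o |X|" by (rule lists_ordLeq[OF inf])
  finally show ?thesis .
qed

lemma Fpow_ordIso:
  assumes inf: "\<not> finite X"
  shows "|Fpow X| =o |X|"
proof -
  have "|X| \<le>o |Fpow X|"
    unfolding card_of_ordLeq[symmetric]
    by (rule exI[of _ "\<lambda>x. {x}"]) (auto simp: Fpow_def)
  then show ?thesis using Fpow_ordLeq[OF inf] ordIso_iff_ordLeq by blast
qed




definition cterm :: "nat set \<Rightarrow> nat \<Rightarrow> real" where
  "cterm S i = (if i \<in> S then (1/3)^(Suc i) else 0)"

definition cf :: "nat set \<Rightarrow> real" where
  "cf S = suminf (cterm S)"

lemma cterm_nonneg: "0 \<le> cterm S i" by (simp add: cterm_def)
lemma cterm_le: "cterm S i \<le> (1/3)^(Suc i)" by (simp add: cterm_def)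

lemma geo_shift: "(\<lambda>k. (1/3::real)^(Suc (k+m))) sums ((1/2)*(1/3)^m)"
proof -
  have "(\<lambda>k. (1/3::real)^k) sums (1/(1-1/3))" by (rule geometric_sums) simp
  then have "(\<lambda>k. (1/3::real)^(Suc m) * (1/3)^k) sums ((1/3)^(Suc m) * (1/(1-1/3)))"
    by (rule sums_mult)
  moreover have "(1/3::real)^(Suc m) * (1/(1-1/3)) = (1/2)*(1/3)^m" by simp
  ultimately show ?thesis by (simp add: power_add mult.commute)
qed

lemma tail_summable: "summable (\<lambda>k. cterm S (k+m))"
  apply (rule summable_comparison_test[OF _ sums_summable[OF geo_shift[of m]]])
  using cterm_le cterm_nonneg by (auto simp: add.commute)

lemma cterm_summable: "summable (cterm S)"
  using tail_summable[of S 0] by simp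

lemma tail_bounds: "0 \<le> (\<Sum>k. cterm S (k+m)) \<and> (\<Sum>k. cterm S (k+m)) \<le> (1/2)*(1/3)^m"
proof
  show "0 \<le> (\<Sum>k. cterm S (k+m))" by (rule suminf_nonneg[OF tail_summable]) (simp add: cterm_nonneg)
  show "(\<Sum>k. cterm S (k+m)) \<le> (1/2)*(1/3)^m"
    using suminf_le[OF _ tail_summable sums_summable[OF geo_shift[of m]]] sums_unique[OF geo_shift[of m]]
      cterm_le by (metis add.commute add_Suc)
qed

lemma cf_split: "cf S = sum (cterm S) {..<m} + (\<Sum>k. cterm S (k+m))"
  unfolding cf_def using suminf_split_initial_segment[OF cterm_summable, of S m] by simp

lemma cf_range: "cf S \<in> {0..1}"
  using cf_split[of S 0] tail_bounds[of S 0] by simp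

lemma cf_inj: "inj cf"
proof
  fix S T assume eq: "cf S = cf T"
  show "S = T"
  proof (rule ccontr)
    assume "S \<noteq> T"
    then have ne: "(S-T) \<union> (T-S) \<noteq> {}" by blast
    define n where "n = (LEAST n. n \<in> (S-T) \<union> (T-S))"
    have nin: "n \<in> (S-T) \<union> (T-S)" using ne unfolding n_def by (metis LeastI_ex ex_in_conv)
    have below: "i < n \<Longrightarrow> (i \<in> S) = (i \<in> T)" for i
      using not_less_Least[of i "\<lambda>n. n \<in> (S-T) \<union> (T-S)"] unfolding n_def by blast
    have P: "sum (cterm S) {..<n} = sum (cterm T) {..<n}"
      by (rule sum.cong) (auto simp: cterm_def below)
    have key: "cf U > cf V" if "n \<in> U" "n \<notin> V" "sum (cterm U) {..<n} = sum (cterm V) {..<n}" for U V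
    proof -
      have "cf U = sum (cterm U) {..<Suc n} + (\<Sum>k. cterm U (k + Suc n))" by (rule cf_split)
      also have "\<dots> \<ge> sum (cterm U) {..<n} + (1/3)^(Suc n)"
        using tail_bounds[of U "Suc n"] that by (simp add: cterm_def)
      finally have 1: "cf U \<ge> sum (cterm U) {..<n} + (1/3)^(Suc n)" .
      have "cf V = sum (cterm V) {..<Suc n} + (\<Sum>k. cterm V (k + Suc n))" by (rule cf_split)
      also have "\<dots> \<le> sum (cterm V) {..<n} + (1/2)*(1/3)^(Suc n)"
        using tail_bounds[of V "Suc n"] that by (simp add: cterm_def)
      finally have 2: "cf V \<le> sum (cterm V) {..<n} + (1/2)*(1/3)^(Suc n)" .
      have "(0::real) < (1/3)^(Suc n)" by simp
      then show ?thesis using 1 2 that(3) by linarith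
    qed
    show False using nin key[of S T] key[of T S] P eq by auto
  qed
qed

lemma cf_null: "range cf \<in> null_sets lebesgue"
proof -
  have "negligible (range cf)"
    unfolding negligible_outer_le
  proof (intro allI impI)
    fix e :: real assume "e > 0"
    obtain m where m: "(2/3::real)^m < e" using real_arch_pow_inv[OF \<open>e>0\<close>, of "2/3"] by auto
    define U where "U = (\<Union>T\<in>Pow {..<m}. {sum (cterm T) {..<m} .. sum (cterm T) {..<m} + (1/2)*(1/3)^m})"
    have sub: "range cf \<subseteq> U"
    proof
      fix x assume "x \<in> range cf"
      then obtain S where x: "x = cf S" by auto
      have "sum (cterm S) {..<m} = sum (cterm (S \<inter> {..<m})) {..<m}"
        by (rule sum.cong) (auto simp: cterm_def)
      then show "x \<in> U" unfolding U_def x using cf_split[of S m] tail_bounds[of S m]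
        by (intro UN_I[of "S \<inter> {..<m}"]) auto
    qed
    have lm: "U \<in> lmeasurable" unfolding U_def
      by (intro fmeasurable.finite_UN) auto
    have "measure lebesgue U \<le> (\<Sum>T\<in>Pow {..<m}. measure lebesgue {sum (cterm T) {..<m} .. sum (cterm T) {..<m} + (1/2)*(1/3)^m})"
      unfolding U_def by (rule measure_UNION_le) auto
    also have "\<dots> = (\<Sum>T\<in>Pow {..<m}. (1/2)*(1/3::real)^m)"
      by (rule sum.cong) auto
    also have "\<dots> = 2^m * ((1/2)*(1/3)^m)" by (simp add: card_Pow)
    also have "\<dots> = (1/2) * (2/3)^m" by (simp add: power_divide)
    also have "\<dots> \<le> e" using m \<open>e>0\<close> by linarith
    finally show "\<exists>T. range cf \<subseteq> T \<and> T \<in> lmeasurable \<and> measure lebesgue T \<le> e"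
      using sub lm by blast
  qed
  then show ?thesis using negligible_iff_null_sets by blast
qed




lemma ln_integral: 
  assumes "0 < d" "d \<le> 1"
  shows "(inverse has_integral (- ln d)) {d..1::real}"
proof -
  have "(inverse has_integral (ln 1 - ln d)) {d..1::real}"
  proof (rule fundamental_theorem_of_calculus)
    show "d \<le> 1" by fact
    fix x :: real assume "x \<in> {d..1}"
    then have "x > 0" using assms by auto
    then show "(ln has_vector_derivative inverse x) (at x within {d..1})"
      by (metis DERIV_ln has_field_derivative_at_within has_real_derivative_iff_has_vector_derivative)
  qed
  then show ?thesis by simp
qed

lemma nn_inv_infinite: "(\<integral>\<^sup>+x. ennreal (inverse x) \<partial>lebesgue_on {0..1}) = \<infinity>"
proof -
  have eq: "(\<integral>\<^sup>+x. ennreal (inverse x) \<partial>lebesgue_on {0..1}) = (\<integral>\<^sup>+x. ennreal (inverse x) * indicator {0..1} x \<partial>lborel)"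
    by (simp add: nn_integral_restrict_space nn_integral_completion)
  have lb: "ennreal (real n) \<le> (\<integral>\<^sup>+x. ennreal (inverse x) * indicator {0..1} x \<partial>lborel)" for n
  proof -
    define d where "d = exp (- real n)"
    have d: "0 < d" "d \<le> 1" by (auto simp: d_def)
    have "ennreal (real n) = ennreal (- ln d)" by (simp add: d_def)
    also have "\<dots> = (\<integral>\<^sup>+x. ennreal (inverse x) * indicator {d..1} x \<partial>lborel)"
      by (rule nn_integral_has_integral_lebesgue'[symmetric]) (use d ln_integral[OF d] in auto)
    also have "\<dots> \<le> (\<integral>\<^sup>+x. ennreal (inverse x) * indicator {0..1} x \<partial>lborel)"
      by (rule nn_integral_mono) (use d in \<open>auto simp: indicator_def\<close>)
    finally show ?thesis .
  qed
  show ?thesis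
  proof (rule ccontr)
    assume "(\<integral>\<^sup>+x. ennreal (inverse x) \<partial>lebesgue_on {0..1}) \<noteq> \<infinity>"
    then obtain r where r: "(\<integral>\<^sup>+x. ennreal (inverse x) * indicator {0..1} x \<partial>lborel) = ennreal r" "0 \<le> r"
      using eq by (metis ennreal_cases infinity_ennreal_def)
    obtain n :: nat where "real n > r" using reals_Archimedean2 by blast
    with lb[of n] r show False by (simp add: ennreal_le_iff)
  qed
qed

lemma not_integrable_dominating:
  fixes g :: "real \<Rightarrow> real" and c :: real
  assumes g: "integrable (lebesgue_on {0..1}) g" and c: "c > 0"
    and ae: "AE x in lebesgue_on {0..1}. c * inverse x \<le> g x"
  shows False
proof -
  have "(\<integral>\<^sup>+x. ennreal (inverse x) \<partial>lebesgue_on {0..1}) \<le> (\<integral>\<^sup>+x. ennreal (g x / c) \<partial>lebesgue_on {0..1})"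
    apply (rule nn_integral_mono_AE)
    using ae apply eventually_elim
    using c by (simp add: field_simps ennreal_leI)
  moreover have "integrable (lebesgue_on {0..1}) (\<lambda>x. g x / c)" using g by simp
  then have "(\<integral>\<^sup>+x. ennreal (g x / c) \<partial>lebesgue_on {0..1}) \<noteq> \<infinity>" by blast
  ultimately show False using nn_inv_infinite by (simp add: top_unique)
qed




locale cons =
  fixes C :: "real set set" and e :: "real set set \<Rightarrow> real" and code :: "real set \<times> real set \<Rightarrow> nat set"
  assumes Cnull: "null_cover C" and Cinf: "infinite C"
    and einj: "inj_on e (Fpow C)"
    and codeinj: "inj_on code (Fpow UNIV \<times> Fpow UNIV)"
begin

definition "AA = e ` Fpow C"
definition "P a = inv_into (Fpow C) e a"
definition "lee a b \<longleftrightarrow> P a \<subseteq> P b"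
definition "Z = range cf"
definition "zpt p = cf (code p)"
definition "v S t = (if \<exists>F G. finite F \<and> finite G \<and> t = zpt (F,G) \<and> S \<inter> F = G then 1 else (0::real))"
definition "base a t = inverse t * (if t \<in> \<Union>(P a) then 0 else (1::real))"
definition "Fn S a t = (if a \<in> AA \<and> t \<in> {0..1} then (if t \<in> Z then v S t else base a t) else 0)"
definition "BB = range Fn"

lemma P_e: "F \<in> Fpow C \<Longrightarrow> P (e F) = F"
  unfolding P_def using einj by (simp add: inv_into_f_f)

lemma P_in: "a \<in> AA \<Longrightarrow> P a \<in> Fpow C"
  unfolding AA_def P_def by (auto intro: inv_into_into)

lemma e_in: "F \<in> Fpow C \<Longrightarrow> e F \<in> AA" unfolding AA_def by auto

lemma empty_Fpow: "{} \<in> Fpow C" by (simp add: Fpow_def)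

lemma directed: "directed_set AA lee"
  unfolding directed_set_def
proof (intro conjI ballI impI)
  show "AA \<noteq> {}" using e_in[OF empty_Fpow] by auto
  fix a b assume a: "a \<in> AA" and b: "b \<in> AA"
  have "P a \<union> P b \<in> Fpow C" using P_in[OF a] P_in[OF b] by (auto simp: Fpow_def)
  then show "\<exists>c\<in>AA. lee a c \<and> lee b c"
    by (intro bexI[of _ "e (P a \<union> P b)"]) (auto simp: lee_def P_e e_in)
qed (auto simp: lee_def)

lemma not_card: "\<not> is_cardinal_dirset AA lee"
proof
  assume "is_cardinal_dirset AA lee"
  then have tot: "total_on AA {(a, b). a \<in> AA \<and> b \<in> AA \<and> lee a b}"
    unfolding is_cardinal_dirset_def card_order_on_def well_order_on_def linear_order_on_def by blast
  obtain N1 N2 where N: "N1 \<in> C" "N2 \<in> C" "N1 \<noteq> N2"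
    using Cinf by (metis finite.emptyI finite_insert infinite_imp_nonempty insert_iff subsetI finite_subset)
  have f: "{N1} \<in> Fpow C" "{N2} \<in> Fpow C" using N by (auto simp: Fpow_def)
  have "e {N1} \<noteq> e {N2}" using einj f N by (metis inj_on_contraD singleton_inject)
  have m: "e {N1} \<in> AA" "e {N2} \<in> AA" using f by (auto intro: e_in)
  then have "lee (e {N1}) (e {N2}) \<or> lee (e {N2}) (e {N1})"
    using tot \<open>e {N1} \<noteq> e {N2}\<close> unfolding total_on_def by blast
  then have "{N1} \<subseteq> {N2} \<or> {N2} \<subseteq> {N1}" unfolding lee_def using P_e f by simp
  then show False using N by auto
qed

lemma zpt_inj: "finite F \<Longrightarrow> finite G \<Longrightarrow> finite F' \<Longrightarrow> finite G' \<Longrightarrow> zpt (F,G) = zpt (F',G') \<Longrightarrow> F = F' \<and> G = G'"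
proof -
  assume a: "finite F" "finite G" "finite F'" "finite G'" "zpt (F,G) = zpt (F',G')"
  have "code (F,G) = code (F',G')" using a(5) cf_inj unfolding zpt_def by (simp add: inj_eq)
  moreover have "(F,G) \<in> Fpow UNIV \<times> Fpow UNIV" "(F',G') \<in> Fpow UNIV \<times> Fpow UNIV"
    using a by (auto simp: Fpow_def)
  ultimately have "(F,G) = (F',G')" using codeinj by (simp add: inj_on_eq_iff)
  then show "F = F' \<and> G = G'" by simp
qed

lemma v_at: "finite F \<Longrightarrow> finite G \<Longrightarrow> v S (zpt (F,G)) = (if S \<inter> F = G then 1 else 0)"
proof -
  assume a: "finite F" "finite G"
  have "(\<exists>F' G'. finite F' \<and> finite G' \<and> zpt (F,G) = zpt (F',G') \<and> S \<inter> F' = G') \<longleftrightarrow> S \<inter> F = G"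
  proof
    assume "\<exists>F' G'. finite F' \<and> finite G' \<and> zpt (F,G) = zpt (F',G') \<and> S \<inter> F' = G'"
    then obtain F' G' where b: "finite F'" "finite G'" "zpt (F,G) = zpt (F',G')" "S \<inter> F' = G'" by blast
    from zpt_inj[OF a b(1,2,3)] b(4) show "S \<inter> F = G" by simp
  next
    assume "S \<inter> F = G" then show "\<exists>F' G'. finite F' \<and> finite G' \<and> zpt (F,G) = zpt (F',G') \<and> S \<inter> F' = G'"
      using a by blast
  qed
  then show ?thesis unfolding v_def by simp
qed

lemma zpt_Z: "zpt p \<in> Z" "zpt p \<in> {0..1}"
  unfolding zpt_def Z_def using cf_range by auto

lemma Z_sub: "Z \<subseteq> {0..1}" unfolding Z_def using cf_range by auto

lemma Fn_at: "finite F \<Longrightarrow> finite G \<Longrightarrow> a \<in> AA \<Longrightarrow> Fn S a (zpt (F,G)) = (if S \<inter> F = G then 1 else 0)"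
  unfolding Fn_def using zpt_Z v_at by auto

lemma a0: "e {} \<in> AA" by (rule e_in[OF empty_Fpow])

lemma Fn_inj: "inj Fn"
proof
  fix S S' assume eq: "Fn S = Fn S'"
  show "S = S'"
  proof (rule ccontr)
    assume "S \<noteq> S'"
    then obtain x where "x \<in> S - S' \<or> x \<in> S' - S" by blast
    then show False
      using eq Fn_at[of "{x}" "{x}" "e {}" S] Fn_at[of "{x}" "{x}" "e {}" S'] a0
      by (auto split: if_splits)
  qed
qed

lemma lin_indep_aux:
  assumes H: "finite T \<and> T \<subseteq> BB \<and> lin_comb T c = (\<lambda>a t. 0)" and Fa: "Fa \<in> T"
  shows "c Fa = 0"
proof -
  obtain S1 where S1: "Fa = Fn S1" using Fa H unfolding BB_def by auto
  define Sig where "Sig = {S. Fn S \<in> T}"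
  have T: "T = Fn ` Sig" using H unfolding Sig_def BB_def by auto
  have finSig: "finite Sig" using H T Fn_inj by (metis finite_imageD inj_on_subset subset_UNIV)
  define pick where "pick S = (SOME x. x \<in> (S - S1) \<union> (S1 - S))" for S
  define Fs where "Fs = pick ` (Sig - {S1})"
  have finFs: "finite Fs" using finSig unfolding Fs_def by simp
  have sep: "S \<inter> Fs \<noteq> S1 \<inter> Fs" if "S \<in> Sig" "S \<noteq> S1" for S
  proof -
    have "\<exists>x. x \<in> (S - S1) \<union> (S1 - S)" using that by blast
    then have "pick S \<in> (S - S1) \<union> (S1 - S)" unfolding pick_def by (rule someI_ex)
    moreover have "pick S \<in> Fs" using that unfolding Fs_def by auto
    ultimately show ?thesis by blast
  qed
  define t where "t = zpt (Fs, S1 \<inter> Fs)"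
  have val: "F (e {}) t = (if F = Fa then 1 else 0)" if FT: "F \<in> T" for F
  proof -
    obtain S where S: "S \<in> Sig" "F = Fn S" using FT T by auto
    have ev: "F (e {}) t = (if S \<inter> Fs = S1 \<inter> Fs then 1 else 0)"
      using Fn_at[OF finFs _ a0, of "S1 \<inter> Fs" S] finFs S unfolding t_def by auto
    show ?thesis
    proof (cases "S = S1")
      case True then show ?thesis using ev S S1 by simp
    next
      case False
      then have "F \<noteq> Fa" using S S1 Fn_inj by (metis injD)
      then show ?thesis using ev sep[OF S(1) False] by simp
    qed
  qed
  have z: "lin_comb T c (e {}) t = 0" using H by simp
  have s1: "lin_comb T c (e {}) t = (\<Sum>F\<in>T. if F = Fa then c F else 0)"
    unfolding lin_comb_def by (rule sum.cong) (auto simp: val)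
  have s2: "(\<Sum>F\<in>T. if F = Fa then c F else 0) = c Fa" using Fa H by (simp add: sum.delta')
  from z s1 s2 show "c Fa = 0" by linarith
qed

lemma lin_indep: "lin_indep BB"
  unfolding lin_indep_def using lin_indep_aux by blast

end



lemma null_mult_meas:
  fixes u :: "real \<Rightarrow> real"
  assumes Z: "Z \<in> null_sets lebesgue"
  shows "(\<lambda>t. indicator Z t * u t) \<in> borel_measurable lebesgue"
proof (rule measurableI)
  fix Y :: "real set" assume Y: "Y \<in> sets borel"
  let ?h = "\<lambda>t. indicator Z t * u t"
  have eq: "?h -` Y \<inter> space lebesgue = (if 0 \<in> Y then - Z else {}) \<union> (Z \<inter> ?h -` Y)"
    apply (rule set_eqI)
    subgoal for x by (cases "x \<in> Z") auto
    done
  have "Z \<inter> ?h -` Y \<in> null_sets lebesgue"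
    by (rule null_sets_completion_subset[OF _ Z]) auto
  moreover have "- Z \<in> sets lebesgue" using Z by (simp add: Compl_in_sets_lebesgue null_setsD2)
  ultimately show "?h -` Y \<inter> space lebesgue \<in> sets lebesgue"
    unfolding eq by auto
qed auto

context cons begin

lemma Z_null: "Z \<in> null_sets lebesgue" unfolding Z_def by (rule cf_null)

lemma C_null: "N \<in> C \<Longrightarrow> N \<in> null_sets lebesgue"
  using Cnull unfolding null_cover_def by auto

lemma C_cover: "{0..1} \<subseteq> \<Union>C"
  using Cnull unfolding null_cover_def by auto

lemma UP_null: "a \<in> AA \<Longrightarrow> \<Union>(P a) \<in> null_sets lebesgue"
proof -
  assume a: "a \<in> AA"
  have "finite (P a)" "P a \<subseteq> C" using P_in[OF a] by (auto simp: Fpow_def)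
  then have "(\<Union>N\<in>P a. N) \<in> null_sets lebesgue"
    by (intro null_sets_UN') (auto simp: countable_finite C_null)
  then show ?thesis by simp
qed

lemma lc_out: "T \<subseteq> BB \<Longrightarrow> a \<notin> AA \<or> t \<notin> {0..1} \<Longrightarrow> lin_comb T c a t = 0"
  unfolding lin_comb_def BB_def by (rule sum.neutral) (auto simp: Fn_def)

lemma lc_main: "T \<subseteq> BB \<Longrightarrow> a \<in> AA \<Longrightarrow> t \<in> {0..1} \<Longrightarrow> t \<notin> Z \<Longrightarrow> lin_comb T c a t = sum c T * base a t"
  unfolding lin_comb_def sum_distrib_right
  by (rule sum.cong) (auto simp: Fn_def BB_def)

lemma base_meas: "a \<in> AA \<Longrightarrow> (\<lambda>t. k * base a t) \<in> borel_measurable lam01"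
proof -
  assume a: "a \<in> AA"
  have U: "\<Union>(P a) \<in> sets lebesgue" using UP_null[OF a] by auto
  have eq: "(\<lambda>t. k * base a t) = (\<lambda>t. k * (inverse t * (1 - indicator (\<Union>(P a)) t)))"
    by (auto simp: base_def indicator_def fun_eq_iff)
  have "(\<lambda>t. k * (inverse t * (1 - indicator (\<Union>(P a)) t))) \<in> borel_measurable lebesgue"
  proof -
    have id: "(\<lambda>x::real. x) \<in> borel_measurable lebesgue" by (rule measurable_completion) simp
    have ind: "indicator (\<Union>(P a)) \<in> borel_measurable lebesgue" using U by simp
    have inv: "(\<lambda>x::real. inverse x) \<in> borel_measurable lebesgue" using id by (rule borel_measurable_inverse)
    show ?thesis
      by (intro borel_measurable_times borel_measurable_const borel_measurable_diff inv ind)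
  qed
  then show ?thesis unfolding eq by (rule measurable_restrict_space1)
qed

lemma lc_meas:
  assumes T: "T \<subseteq> BB" and a: "a \<in> AA"
  shows "lin_comb T c a \<in> borel_measurable lam01"
proof -
  let ?k = "sum c T"
  let ?g = "\<lambda>t. ?k * base a t + indicator Z t * (lin_comb T c a t - ?k * base a t)"
  have g: "?g \<in> borel_measurable lam01"
    apply (rule borel_measurable_add[OF base_meas[OF a]])
    apply (rule measurable_restrict_space1)
    by (rule null_mult_meas[OF Z_null])
  have eq: "\<And>t. t \<in> space lam01 \<Longrightarrow> lin_comb T c a t = ?g t"
    using lc_main[OF T a] by (auto simp: indicator_def)
  show ?thesis by (subst measurable_cong[OF eq]) (auto intro: g)
qed

lemma lam01_space: "space lam01 = {0..1}" by simp

lemma Icc_sets: "{0..1::real} \<inter> space lebesgue \<in> sets lebesgue" by simp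

lemma lc_tendsto:
  assumes T: "T \<subseteq> BB" and x: "x \<in> {0..1}" "x \<notin> Z"
  shows "net_tendsto AA lee (\<lambda>a. lin_comb T c a x) 0"
  unfolding net_tendsto_def
proof (intro allI impI)
  fix \<epsilon> :: real assume "\<epsilon> > 0"
  obtain N where N: "N \<in> C" "x \<in> N" using C_cover x by auto
  have NF: "{N} \<in> Fpow C" using N by (simp add: Fpow_def)
  show "\<exists>a0\<in>AA. \<forall>a\<in>AA. lee a0 a \<longrightarrow> \<bar>lin_comb T c a x - 0\<bar> < \<epsilon>"
  proof (intro bexI[OF _ e_in[OF NF]] ballI impI)
    fix a assume a: "a \<in> AA" and le: "lee (e {N}) a"
    then have "N \<in> P a" unfolding lee_def using P_e[OF NF] by auto
    then have "base a x = 0" using N by (auto simp: base_def)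
    then show "\<bar>lin_comb T c a x - 0\<bar> < \<epsilon>" using lc_main[OF T a x] \<open>\<epsilon>>0\<close> by simp
  qed
qed

lemma AE_good:
  assumes a: "a \<in> AA"
  shows "AE x in lam01. x \<notin> Z \<and> x \<notin> \<Union>(P a) \<and> x \<noteq> 0 \<and> x \<in> {0..1}"
proof -
  have "AE x in lebesgue. x \<notin> Z" by (rule AE_not_in[OF Z_null])
  moreover have "AE x in lebesgue. x \<notin> \<Union>(P a)" by (rule AE_not_in[OF UP_null[OF a]])
  moreover have "AE x in lebesgue. x \<notin> {0::real}"
    by (rule AE_not_in) (simp add: null_sets_completionI)
  ultimately have "AE x in lebesgue. x \<in> {0..1} \<longrightarrow> x \<notin> Z \<and> x \<notin> \<Union>(P a) \<and> x \<noteq> 0 \<and> x \<in> {0..1}"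
    by eventually_elim auto
  then show ?thesis using AE_restrict_space_iff[OF Icc_sets] by blast
qed

lemma measure_one:
  assumes T: "T \<subseteq> BB" and k: "sum c T \<noteq> 0" and a: "a \<in> AA"
  shows "measure lam01 {x \<in> {0..1}. \<bar>lin_comb T c a x - 0\<bar> \<ge> \<bar>sum c T\<bar>} = 1"
proof -
  let ?S = "{x \<in> {0..1}. \<bar>lin_comb T c a x - 0\<bar> \<ge> \<bar>sum c T\<bar>}"
  have meas: "lin_comb T c a \<in> borel_measurable lam01" by (rule lc_meas[OF T a])
  have S: "?S \<in> sets lam01"
  proof -
    have "{x \<in> space lam01. \<bar>sum c T\<bar> \<le> \<bar>lin_comb T c a x - 0\<bar>} \<in> sets lam01"
      using meas by measurable
    then show ?thesis by simp
  qed
  have sp: "{0..1::real} \<in> sets lam01" using sets.top[of lam01] by simp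
  have "AE x in lam01. x \<in> ?S \<longleftrightarrow> x \<in> {0..1}"
    using AE_good[OF a]
  proof eventually_elim
    case (elim x)
    then have x: "0 < x" "x \<le> 1" "x \<notin> Z" "x \<in> {0..1}" by auto
    have "lin_comb T c a x = sum c T * inverse x"
      using lc_main[OF T a x(4) x(3)] elim by (simp add: base_def)
    moreover have "\<bar>sum c T\<bar> \<le> \<bar>sum c T * inverse x\<bar>"
    proof -
      have "1 \<le> inverse x" using x by (simp add: one_le_inverse)
      then have "\<bar>sum c T\<bar> * 1 \<le> \<bar>sum c T\<bar> * inverse x" by (intro mult_left_mono) auto
      then show ?thesis using x by (simp add: abs_mult)
    qed
    ultimately show ?case using x by auto
  qed
  then have "measure lam01 ?S = measure lam01 {0..1}" by (rule measure_eq_AE[OF _ S sp])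
  also have "\<dots> = measure lebesgue {0..1::real}"
    by (rule measure_restrict_space) auto
  also have "\<dots> = 1" by simp
  finally show ?thesis .
qed

lemma main_mem:
  assumes fin: "finite T" and T: "T \<subseteq> BB" and k: "sum c T \<noteq> 0"
  shows "lin_comb T c \<in> ANM AA lee - ND AA lee"
proof
  have nets: "lin_comb T c \<in> nets AA" unfolding nets_def using lc_out[OF T] by blast
  show "lin_comb T c \<in> ANM AA lee"
    unfolding ANM_def
  proof (intro CollectI conjI nets ballI bexI[of _ "\<lambda>x. 0"])
    show "lin_comb T c a \<in> borel_measurable lam01" if "a \<in> AA" for a using lc_meas[OF T that] .
    show "(\<lambda>x. 0::real) \<in> borel_measurable lam01" by simp
    show "AE x in lam01. net_tendsto AA lee (\<lambda>a. lin_comb T c a x) 0"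
    proof -
      have "AE x in lebesgue. x \<notin> Z" by (rule AE_not_in[OF Z_null])
      then have "AE x in lebesgue. x \<in> {0..1} \<longrightarrow> net_tendsto AA lee (\<lambda>a. lin_comb T c a x) 0"
        by eventually_elim (use lc_tendsto[OF T] in auto)
      then show ?thesis using AE_restrict_space_iff[OF Icc_sets] by blast
    qed
    show "\<exists>e>0. \<not> net_tendsto AA lee (\<lambda>a. measure lam01 {x \<in> {0..1}. e \<le> \<bar>lin_comb T c a x - 0\<bar>}) 0"
    proof (intro exI conjI)
      show "\<bar>sum c T\<bar> > 0" using k by simp
      show "\<not> net_tendsto AA lee (\<lambda>a. measure lam01 {x \<in> {0..1}. \<bar>sum c T\<bar> \<le> \<bar>lin_comb T c a x - 0\<bar>}) 0"
        unfolding net_tendsto_def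
      proof
        assume "\<forall>e>0. \<exists>a0\<in>AA. \<forall>a\<in>AA. lee a0 a \<longrightarrow> \<bar>measure lam01 {x \<in> {0..1}. \<bar>sum c T\<bar> \<le> \<bar>lin_comb T c a x - 0\<bar>} - 0\<bar> < e"
        then obtain a0 where "a0 \<in> AA" "\<forall>a\<in>AA. lee a0 a \<longrightarrow> \<bar>measure lam01 {x \<in> {0..1}. \<bar>sum c T\<bar> \<le> \<bar>lin_comb T c a x - 0\<bar>} - 0\<bar> < 1"
          by (meson zero_less_one)
        then show False using measure_one[OF T k \<open>a0 \<in> AA\<close>] by (auto simp: lee_def)
      qed
    qed
  qed
  show "lin_comb T c \<notin> ND AA lee"
  proof
    assume "lin_comb T c \<in> ND AA lee"
    then obtain g where g: "integrable lam01 g" "\<forall>a\<in>AA. AE x in lam01. \<bar>lin_comb T c a x\<bar> \<le> g x"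
      unfolding ND_def by blast
    have "AE x in lam01. \<bar>sum c T\<bar> * inverse x \<le> g x"
      using AE_good[OF a0] g(2)[rule_format, OF a0]
    proof eventually_elim
      case (elim x)
      then have x: "0 < x" "x \<notin> Z" "x \<in> {0..1}" by auto
      have "P (e {}) = {}" using P_e[OF empty_Fpow] .
      then have "lin_comb T c (e {}) x = sum c T * inverse x"
        using lc_main[OF T a0 x(3) x(2)] by (simp add: base_def)
      then show ?case using elim x by (simp add: abs_mult)
    qed
    then show False using not_integrable_dominating[OF g(1), of "\<bar>sum c T\<bar>"] k by simp
  qed
qed

end



lemma singleton_cover: "null_cover ((\<lambda>x. {x}) ` {0..1::real})"
  unfolding null_cover_def by (auto simp: null_sets_completionI)

lemma cover_infinite: "null_cover F \<Longrightarrow> infinite F"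
proof
  assume F: "null_cover F" and fin: "finite F"
  have "(\<Union>N\<in>F. N) \<in> null_sets lebesgue"
    using F fin by (intro null_sets_UN') (auto simp: countable_finite null_cover_def)
  moreover have "{0..1::real} \<subseteq> (\<Union>N\<in>F. N)" using F by (auto simp: null_cover_def)
  ultimately have "{0..1::real} \<in> null_sets lebesgue" using null_sets_completion_subset by blast
  then have "{0..1::real} \<in> null_sets lborel" by (simp add: null_sets_completion_iff)
  then have "emeasure lborel {0..1::real} = 0" by (rule null_setsD1)
  then show False by simp
qed

lemma min_cover: "\<exists>C. null_cover C \<and> (\<forall>F. null_cover F \<longrightarrow> |C| \<le>o |F| )"
proof -
  let ?Q = "card_of ` {F. null_cover F}"
  have "|(\<lambda>x. {x}) ` {0..1::real}| \<in> ?Q" using singleton_cover by blast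
  then obtain z where z: "z \<in> ?Q" and mn: "\<And>y. (y, z) \<in> ordLess \<Longrightarrow> y \<notin> ?Q"
    using wfE_min[OF wf_ordLess] by metis
  then obtain C where C: "null_cover C" "z = |C|" by blast
  have "|C| \<le>o |F|" if "null_cover F" for F
  proof -
    have "\<not> |F| <o |C|" using mn[of "|F|"] that C by blast
    then show ?thesis using ordLess_or_ordLeq[OF card_of_Well_order card_of_Well_order, of F C] by blast
  qed
  then show ?thesis using C by blast
qed

theorem mainTheorem2:
  shows "\<exists>(A :: real set) (le :: real \<Rightarrow> real \<Rightarrow> bool).
           directed_set A le \<and> \<not> is_cardinal_dirset A le \<and> card_eq_cov_N A \<and>
           coneable (nets A) (ANM A le - ND A le) (Pow (UNIV :: real set))"
proof -
  obtain C where C: "null_cover C" and Cmin: "\<And>F. null_cover F \<Longrightarrow> |C| \<le>o |F|"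
    using min_cover by blast
  have Cinf: "infinite C" by (rule cover_infinite[OF C])
  have FC: "|Fpow C| =o |C|" by (rule Fpow_ordIso[OF Cinf])
  have "|Fpow C| \<le>o |UNIV::real set|"
  proof -
    have "|C| \<le>o |(\<lambda>x. {x}) ` {0..1::real}|" by (rule Cmin[OF singleton_cover])
    also have "|(\<lambda>x. {x}) ` {0..1::real}| \<le>o |{0..1::real}|" by (rule card_of_image)
    also have "|{0..1::real}| \<le>o |UNIV::real set|" by (rule card_of_mono1) simp
    finally have "|C| \<le>o |UNIV::real set|" .
    then show ?thesis using FC ordIso_ordLeq_trans by blast
  qed
  then obtain e :: "real set set \<Rightarrow> real" where einj: "inj_on e (Fpow C)"
    unfolding card_of_ordLeq[symmetric] by blast
  have infR: "infinite (UNIV::real set)" by (rule infinite_UNIV_char_0)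
  have "|Fpow (UNIV::real set) \<times> Fpow (UNIV::real set)| \<le>o |UNIV::nat set set|"
  proof -
    have f: "|Fpow (UNIV::real set)| \<le>o |UNIV::real set|" by (rule Fpow_ordLeq[OF infR])
    have "|Fpow (UNIV::real set) \<times> Fpow (UNIV::real set)| \<le>o |(UNIV::real set) \<times> Fpow (UNIV::real set)|"
      by (rule card_of_Times_mono1[OF f])
    also have "|(UNIV::real set) \<times> Fpow (UNIV::real set)| \<le>o |(UNIV::real set) \<times> (UNIV::real set)|"
      by (rule card_of_Times_mono2[OF f])
    also have "|(UNIV::real set) \<times> (UNIV::real set)| \<le>o |UNIV::real set|"
      using card_of_Times_same_infinite[OF infR, unfolded ordIso_iff_ordLeq] by (rule conjunct1)
    also have "|UNIV::real set| \<le>o |UNIV::nat set set|"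
    proof -
      have "(UNIV::real set) \<approx> (UNIV::nat set set)" by (rule eqpoll_sym[OF nat_sets_eqpoll_reals])
      then have "|UNIV::real set| =o |UNIV::nat set set|" by (simp add: eqpoll_iff_card_of_ordIso)
      from this[unfolded ordIso_iff_ordLeq] show ?thesis by (rule conjunct1)
    qed
    finally show ?thesis .
  qed
  then obtain code :: "real set \<times> real set \<Rightarrow> nat set" where codeinj: "inj_on code (Fpow UNIV \<times> Fpow UNIV)"
    unfolding card_of_ordLeq[symmetric] by blast
  interpret cons C e code
    by unfold_locales (use C Cinf einj codeinj in auto)
  have cardA: "|AA| =o |C|"
  proof -
    have "|Fpow C| =o |AA|" unfolding AA_def card_of_ordIso[symmetric]
      using einj inj_on_imp_bij_betw by blast
    then show ?thesis using FC ordIso_symmetric ordIso_transitive by blast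
  qed
  have cov: "card_eq_cov_N AA"
    unfolding card_eq_cov_N_def
    using C cardA Cmin ordIso_ordLeq_trans by blast
  have sub: "BB \<subseteq> ANM AA lee - ND AA lee"
  proof
    fix F assume "F \<in> BB"
    moreover have "lin_comb {F} (\<lambda>_. 1) = F" by (simp add: lin_comb_def)
    ultimately show "F \<in> ANM AA lee - ND AA lee" using main_mem[of "{F}" "\<lambda>_. 1"] by auto
  qed
  have subV: "ANM AA lee - ND AA lee \<subseteq> nets AA" unfolding ANM_def by auto
  have cardB: "|BB| =o |Pow (UNIV::real set)|"
  proof -
    have "|UNIV::real set set| =o |BB|" unfolding BB_def card_of_ordIso[symmetric]
      using Fn_inj inj_on_imp_bij_betw by blast
    then show ?thesis using ordIso_symmetric by simp
  qed
  have pos: "pos_coneable (nets AA) (ANM AA lee - ND AA lee) (Pow (UNIV :: real set))"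
    unfolding pos_coneable_def
  proof (intro exI[of _ BB] conjI sub subV lin_indep cardB allI impI)
    fix T and c :: "(real \<Rightarrow> real \<Rightarrow> real) \<Rightarrow> real" assume H: "finite T \<and> T \<noteq> {} \<and> T \<subseteq> BB \<and> (\<forall>F\<in>T. 0 < c F)"
    then have "sum c T > 0" by (intro sum_pos) auto
    then show "lin_comb T c \<in> ANM AA lee - ND AA lee" using H main_mem by simp
  qed
  have neg: "neg_coneable (nets AA) (ANM AA lee - ND AA lee) (Pow (UNIV :: real set))"
    unfolding neg_coneable_def
  proof (intro exI[of _ BB] conjI sub subV lin_indep cardB allI impI)
    fix T and c :: "(real \<Rightarrow> real \<Rightarrow> real) \<Rightarrow> real" assume H: "finite T \<and> T \<noteq> {} \<and> T \<subseteq> BB \<and> (\<forall>F\<in>T. c F < 0)"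
    then have "sum (\<lambda>F. - c F) T > 0" by (intro sum_pos) auto
    then have "sum c T < 0" by (simp add: sum_negf)
    then show "lin_comb T c \<in> ANM AA lee - ND AA lee" using H main_mem by simp
  qed
  show ?thesis
    using directed not_card cov pos neg unfolding coneable_def by blast
qed


end
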